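(* Let $G$ be a scheduling game on $m\ge2$ identical machines of speed $1$ with a global priority list, in which every job $i$ has negative deterioration $p_i(t)=\max\{\tau_i,b_i-a_it\}$ with $0\le a_i\le1$ (all jobs delay-averse). Then every pure Nash equilibrium $\sigma$ of $G$ satisfies $C_{\max}(\sigma)\le\left(3-\frac2m\right)OPT(G)$; i.e., $PoA({\cal G}^{-DA}_{PGlobal})\le 3-\frac2m$.
   Context: Scheduling game: a finite set $N$ of $n$ jobs (players) and a set $M$ of $m$ machines; machine $j$ has speed $s_j>0$. With a global priority list, all machines share the same bijection $\pi:N\to\{1,\dots,n\}$, and job $u$ has higher priority than $v$ iff $\pi(u)<\pi(v)$. Negative deterioration: $p_i(t)=\max\{\tau_i,b_i-a_it\}$ with $b_i,a_i\ge0$, $\tau_i>0$. A profile $\sigma\in M^N$ assigns each job to a machine. On machine $j$, the jobs assigned to it, listed in increasing $\pi$-order as $i_1,i_2,\dots$, are processed without idle time: $S_{i_1}(\sigma)=0$, $C_{i_k}(\sigma)=S_{i_k}(\sigma)+p_{i_k}(S_{i_k}(\sigma))/s_j$, $S_{i_{k+1}}(\sigma)=C_{i_k}(\sigma)$. The cost of job $i$ is $C_i(\sigma)$. A pure Nash equilibrium (NE) is a profile in which no job can strictly decrease its completion time by unilaterally changing its machine. Makespan $C_{\max}(\sigma)=\max_iC_i(\sigma)$; $OPT(G)=\min_\sigma C_{\max}(\sigma)$ over all profiles. ${\cal G}^{-DA}_{PGlobal}$ denotes the class of all games described in the claim; its PoA is the supremum over its games of $\max_{\sigma\text{ NE}}C_{\max}(\sigma)/OPT(G)$.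 *)

theory Defs
  imports Main "HOL-Library.FuncSet" Complex_Main
begin

definition proc :: "real \<Rightarrow> real \<Rightarrow> real \<Rightarrow> real \<Rightarrow> real" where
  "proc tau b a t = max tau (b - a * t)"

primrec run :: "('j \<Rightarrow> real \<Rightarrow> real) \<Rightarrow> real \<Rightarrow> 'j list \<Rightarrow> ('j \<times> real) list" where
  "run p t [] = []"
| "run p t (i # is) = (let c = t + p i t in (i, c) # run p c is)"

text \<open>Jobs of N assigned to machine j under profile sigma, in increasing priority order
  (prio is a bijection N -> {1..n}).\<close>
definition machine_jobs :: "'j set \<Rightarrow> ('j \<Rightarrow> nat) \<Rightarrow> ('j \<Rightarrow> 'm) \<Rightarrow> 'm \<Rightarrow> 'j list" where
  "machine_jobs N prio sigma j =
     filter (\<lambda>i. sigma i = j) (map (inv_into N prio) [1..<Suc (card N)])"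

definition compl :: "'j set \<Rightarrow> ('j \<Rightarrow> nat) \<Rightarrow> ('j \<Rightarrow> real) \<Rightarrow> ('j \<Rightarrow> real) \<Rightarrow> ('j \<Rightarrow> real)
                     \<Rightarrow> ('j \<Rightarrow> 'm) \<Rightarrow> 'j \<Rightarrow> real" where
  "compl N prio tau b a sigma i =
     the (map_of (run (\<lambda>k t. proc (tau k) (b k) (a k) t) 0 (machine_jobs N prio sigma (sigma i))) i)"

definition is_profile :: "'j set \<Rightarrow> 'm set \<Rightarrow> ('j \<Rightarrow> 'm) \<Rightarrow> bool" where
  "is_profile N M sigma \<longleftrightarrow> (\<forall>i\<in>N. sigma i \<in> M)"

definition is_NE :: "'j set \<Rightarrow> 'm set \<Rightarrow> ('j \<Rightarrow> nat) \<Rightarrow> ('j \<Rightarrow> real) \<Rightarrow> ('j \<Rightarrow> real)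
                     \<Rightarrow> ('j \<Rightarrow> real) \<Rightarrow> ('j \<Rightarrow> 'm) \<Rightarrow> bool" where
  "is_NE N M prio tau b a sigma \<longleftrightarrow> is_profile N M sigma \<and>
     (\<forall>i\<in>N. \<forall>j\<in>M. compl N prio tau b a sigma i \<le> compl N prio tau b a (sigma(i := j)) i)"

definition makespan :: "'j set \<Rightarrow> ('j \<Rightarrow> nat) \<Rightarrow> ('j \<Rightarrow> real) \<Rightarrow> ('j \<Rightarrow> real)
                     \<Rightarrow> ('j \<Rightarrow> real) \<Rightarrow> ('j \<Rightarrow> 'm) \<Rightarrow> real" where
  "makespan N prio tau b a sigma = Max (insert 0 (compl N prio tau b a sigma ` N))"

definition OPT :: "'j set \<Rightarrow> 'm set \<Rightarrow> ('j \<Rightarrow> nat) \<Rightarrow> ('j \<Rightarrow> real) \<Rightarrow> ('j \<Rightarrow> real)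
                     \<Rightarrow> ('j \<Rightarrow> real) \<Rightarrow> real" where
  "OPT N M prio tau b a = (INF sigma\<in>{sigma. is_profile N M sigma}. makespan N prio tau b a sigma)"

end

theory Submission
  imports Defs
begin

primrec fin :: "('j \<Rightarrow> real \<Rightarrow> real) \<Rightarrow> real \<Rightarrow> 'j list \<Rightarrow> real" where
  "fin p t [] = t"
| "fin p t (i # is) = fin p (t + p i t) is"

lemma fin_append: "fin p t (xs @ ys) = fin p (fin p t xs) ys"
  by (induction xs arbitrary: t) auto

lemma run_append: "run p t (xs @ ys) = run p t xs @ run p (fin p t xs) ys"
  by (induction xs arbitrary: t) (auto simp: Let_def)

lemma map_fst_run: "map fst (run p t xs) = xs"
  by (induction xs arbitrary: t) (auto simp: Let_def)

lemma map_of_run: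
  assumes "i \<notin> set xs"
  shows "map_of (run p t (xs @ i # ys)) i = Some (fin p t xs + p i (fin p t xs))"
proof -
  have "map_of (run p t xs) i = None"
    using assms map_fst_run[of p t xs] by (simp add: map_of_eq_None_iff) (metis set_map)
  then show ?thesis by (simp add: run_append map_add_def Let_def)
qed

lemma filter_split:
  assumes "sorted_wrt (\<lambda>x y. (prio::'j\<Rightarrow>nat) x < prio y) L" "i \<in> set L" "Q i"
  shows "filter Q L = filter (\<lambda>x. Q x \<and> prio x < prio i) L @ i # filter (\<lambda>x. Q x \<and> prio i < prio x) L"
  using assms
proof (induction L)
  case Nil then show ?case by simp
next
  case (Cons y L)
  show ?case
  proof (cases "y = i")
    case True
    then have "filter (\<lambda>x. Q x \<and> prio x < prio i) L = []" 
      "filter (\<lambda>x. Q x \<and> prio i < prio x) L = filter Q L"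
      using Cons.prems(1) by (auto simp: filter_empty_conv intro!: filter_cong)
    then show ?thesis using True Cons.prems by simp
  next
    case False
    then have "i \<in> set L" "prio y < prio i" using Cons.prems by auto
    then show ?thesis using Cons by auto
  qed
qed

lemma tele:
  assumes "sorted_wrt (\<lambda>x y. (prio::'j\<Rightarrow>nat) x < prio y) xs"
  shows "fin p t xs = t + (\<Sum>x\<in>set xs. p x (fin p t (filter (\<lambda>y. prio y < prio x) xs)))"
  using assms
proof (induction xs rule: rev_induct)
  case Nil then show ?case by simp
next
  case (snoc i xs)
  have s: "sorted_wrt (\<lambda>x y. prio x < prio y) xs" and lt: "\<forall>x\<in>set xs. prio x < prio i"
    using snoc.prems by (auto simp: sorted_wrt_append)
  then have ni: "i \<notin> set xs" by auto
  have f1: "filter (\<lambda>y. prio y < prio i) (xs @ [i]) = xs"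
    using lt by (auto intro: filter_True)
  have f2: "\<And>x. x \<in> set xs \<Longrightarrow> filter (\<lambda>y. prio y < prio x) (xs @ [i]) = filter (\<lambda>y. prio y < prio x) xs"
    using lt by auto
  have "(\<Sum>x\<in>set (xs@[i]). p x (fin p t (filter (\<lambda>y. prio y < prio x) (xs@[i])))) =
        p i (fin p t xs) + (\<Sum>x\<in>set xs. p x (fin p t (filter (\<lambda>y. prio y < prio x) xs)))"
    using ni f1 f2 by (simp add: sum.insert_if)
  then show ?case using snoc.IH[OF s] by (simp add: fin_append)
qed

lemma chain:
  assumes "sorted_wrt (\<lambda>x y. (prio::'j\<Rightarrow>nat) x < prio y) xs"
    and anti: "\<And>x s t. x \<in> set xs \<Longrightarrow> s \<le> t \<Longrightarrow> p x t \<le> p x s"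
    and mon: "\<And>x s t. x \<in> set xs \<Longrightarrow> s \<le> t \<Longrightarrow> s + p x s \<le> t + p x t"
    and nn: "\<And>x. x \<in> set xs \<Longrightarrow> p x (S x) \<ge> 0"
  shows "fin p 0 xs \<le> (\<Sum>x\<in>set xs. p x (S x)) \<or>
    (\<exists>g\<in>set xs. fin p 0 xs \<le> S g + p g (S g) + (\<Sum>x\<in>{x\<in>set xs. prio g < prio x}. p x (S x)))"
  using assms
proof (induction xs rule: rev_induct)
  case Nil then show ?case by simp
next
  case (snoc i xs)
  have s: "sorted_wrt (\<lambda>x y. prio x < prio y) xs" and lt: "\<forall>x\<in>set xs. prio x < prio i"
    using snoc.prems by (auto simp: sorted_wrt_append)
  then have ni: "i \<notin> set xs" by auto
  have IH: "fin p 0 xs \<le> (\<Sum>x\<in>set xs. p x (S x)) \<or>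
    (\<exists>g\<in>set xs. fin p 0 xs \<le> S g + p g (S g) + (\<Sum>x\<in>{x\<in>set xs. prio g < prio x}. p x (S x)))"
    using snoc.IH[OF s] snoc.prems by auto
  define T where "T = fin p 0 xs"
  have fe: "fin p 0 (xs @ [i]) = T + p i T" by (simp add: fin_append T_def)
  show ?case
  proof (cases "T < S i")
    case True
    have "T + p i T \<le> S i + p i (S i)" using snoc.prems(3)[of i T "S i"] True by auto
    moreover have E: "{x\<in>set (xs@[i]). prio i < prio x} = {}" using lt by auto
    ultimately have "fin p 0 (xs @ [i]) \<le> S i + p i (S i) + (\<Sum>x\<in>{x\<in>set (xs@[i]). prio i < prio x}. p x (S x))"
      using fe by (simp only: E sum.empty)
    then show ?thesis by auto
  next
    case False
    then have pi: "p i T \<le> p i (S i)" using snoc.prems(2)[of i "S i" T] by auto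
    from IH show ?thesis
    proof
      assume "fin p 0 xs \<le> (\<Sum>x\<in>set xs. p x (S x))"
      then have "fin p 0 (xs@[i]) \<le> (\<Sum>x\<in>set (xs@[i]). p x (S x))"
        using fe pi ni T_def by (simp add: sum.insert_if)
      then show ?thesis by blast
    next
      assume "\<exists>g\<in>set xs. fin p 0 xs \<le> S g + p g (S g) + (\<Sum>x\<in>{x\<in>set xs. prio g < prio x}. p x (S x))"
      then obtain g where g: "g \<in> set xs" "T \<le> S g + p g (S g) + (\<Sum>x\<in>{x\<in>set xs. prio g < prio x}. p x (S x))"
        using T_def by blast
      have "{x\<in>set (xs@[i]). prio g < prio x} = insert i {x\<in>set xs. prio g < prio x}"
        using g(1) lt by auto
      then have "(\<Sum>x\<in>{x\<in>set (xs@[i]). prio g < prio x}. p x (S x)) = p i (S i) + (\<Sum>x\<in>{x\<in>set xs. prio g < prio x}. p x (S x))"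
        using ni by simp
      then have "fin p 0 (xs@[i]) \<le> S g + p g (S g) + (\<Sum>x\<in>{x\<in>set (xs@[i]). prio g < prio x}. p x (S x))"
        using fe pi g(2) by linarith
      then show ?thesis using g(1) by auto
    qed
  qed
qed


locale sg =
  fixes N :: "'j set" and prio :: "'j \<Rightarrow> nat" and tau b a :: "'j \<Rightarrow> real"
  assumes finN: "finite N" and bij: "bij_betw prio N {1..card N}"
    and taupos: "\<And>i. i \<in> N \<Longrightarrow> tau i > 0"
    and arange: "\<And>i. i \<in> N \<Longrightarrow> 0 \<le> a i \<and> a i \<le> 1"
begin

definition pp :: "'j \<Rightarrow> real \<Rightarrow> real" where "pp i t = proc (tau i) (b i) (a i) t"

definition LL :: "'j list" where "LL = map (inv_into N prio) [1..<Suc (card N)]"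

lemma setLL: "set LL = N"
proof -
  have "bij_betw (inv_into N prio) {1..card N} N" using bij by (rule bij_betw_inv_into)
  then have "inv_into N prio ` {1..card N} = N" by (simp add: bij_betw_def)
  moreover have "set [1..<Suc (card N)] = {1..card N}" by auto
  ultimately show ?thesis unfolding LL_def by simp
qed

lemma sortedLL: "sorted_wrt (\<lambda>x y. prio x < prio y) LL"
proof -
  have img: "prio ` N = {1..card N}" using bij by (simp add: bij_betw_def)
  have "sorted_wrt (\<lambda>x y. prio (inv_into N prio x) < prio (inv_into N prio y)) [1..<Suc (card N)]"
  proof (rule sorted_wrt_mono_rel[OF _ sorted_wrt_upt])
    fix x y assume "x \<in> set [1..<Suc (card N)]" "y \<in> set [1..<Suc (card N)]" "x < y"
    then have "x \<in> prio ` N" "y \<in> prio ` N" using img by auto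
    then show "prio (inv_into N prio x) < prio (inv_into N prio y)"
      using \<open>x < y\<close> by (simp add: f_inv_into_f)
  qed
  then show ?thesis unfolding LL_def by (simp add: sorted_wrt_map)
qed

definition bef :: "('j \<Rightarrow> 'm) \<Rightarrow> 'm \<Rightarrow> 'j \<Rightarrow> 'j list" where
  "bef \<sigma> j i = filter (\<lambda>x. \<sigma> x = j \<and> prio x < prio i) LL"

lemma set_bef: "set (bef \<sigma> j i) = {x\<in>N. \<sigma> x = j \<and> prio x < prio i}"
  unfolding bef_def using setLL by auto

lemma sorted_bef: "sorted_wrt (\<lambda>x y. prio x < prio y) (bef \<sigma> j i)"
  unfolding bef_def using sortedLL by (simp add: sorted_wrt_filter)

lemma pp_eta: "(\<lambda>k t. proc (tau k) (b k) (a k) t) = pp"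
  by (simp add: pp_def fun_eq_iff)

lemma compl_eq:
  assumes "i \<in> N"
  shows "compl N prio tau b a \<sigma> i = fin pp 0 (bef \<sigma> (\<sigma> i) i) + pp i (fin pp 0 (bef \<sigma> (\<sigma> i) i))"
proof -
  have "machine_jobs N prio \<sigma> (\<sigma> i) = filter (\<lambda>x. \<sigma> x = \<sigma> i) LL"
    unfolding machine_jobs_def LL_def ..
  also have "\<dots> = bef \<sigma> (\<sigma> i) i @ i # filter (\<lambda>x. \<sigma> x = \<sigma> i \<and> prio i < prio x) LL"
    unfolding bef_def by (rule filter_split[OF sortedLL]) (use assms setLL in auto)
  finally have mj: "machine_jobs N prio \<sigma> (\<sigma> i) = bef \<sigma> (\<sigma> i) i @ i # filter (\<lambda>x. \<sigma> x = \<sigma> i \<and> prio i < prio x) LL" .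
  have ni: "i \<notin> set (bef \<sigma> (\<sigma> i) i)" by (simp add: set_bef)
  show ?thesis unfolding compl_def pp_eta mj map_of_run[OF ni] by simp
qed

lemma compl_upd:
  assumes "i \<in> N"
  shows "compl N prio tau b a (\<sigma>(i:=j)) i = fin pp 0 (bef \<sigma> j i) + pp i (fin pp 0 (bef \<sigma> j i))"
proof -
  have "bef (\<sigma>(i:=j)) j i = bef \<sigma> j i"
    unfolding bef_def by (rule filter_cong) auto
  then show ?thesis using compl_eq[OF assms, of "\<sigma>(i:=j)"] by simp
qed

lemma pp_ge: "i \<in> N \<Longrightarrow> pp i t \<ge> tau i"
  by (simp add: pp_def proc_def)

lemma pp_anti: "i \<in> N \<Longrightarrow> s \<le> t \<Longrightarrow> pp i t \<le> pp i s"
proof -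
  assume "i \<in> N" "s \<le> t"
  then have "a i * s \<le> a i * t" using arange by (simp add: mult_left_mono)
  then show ?thesis by (simp add: pp_def proc_def)
qed

lemma pp_mono: "i \<in> N \<Longrightarrow> s \<le> t \<Longrightarrow> s + pp i s \<le> t + pp i t"
proof -
  assume "i \<in> N" "s \<le> t"
  then have "(1 - a i) * s \<le> (1 - a i) * t" using arange by (simp add: mult_left_mono)
  then have "s - a i * s \<le> t - a i * t" by (simp add: algebra_simps)
  then show ?thesis using \<open>s \<le> t\<close> unfolding pp_def proc_def max_def by (auto simp: algebra_simps)
qed

lemma fin_nonneg: "set xs \<subseteq> N \<Longrightarrow> t \<ge> 0 \<Longrightarrow> fin pp t xs \<ge> 0"
proof (induction xs arbitrary: t)
  case Nil then show ?case by simp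
next
  case (Cons i xs)
  have "pp i t \<ge> 0" using pp_ge[of i t] taupos[of i] Cons.prems by auto
  then show ?case using Cons by simp
qed


lemma prefix_sum:
  assumes "i \<in> N"
  shows "compl N prio tau b a \<sigma> i =
    (\<Sum>x\<in>{x\<in>N. \<sigma> x = \<sigma> i \<and> prio x \<le> prio i}. pp x (fin pp 0 (bef \<sigma> (\<sigma> x) x)))"
proof -
  define ys where "ys = filter (\<lambda>y. \<sigma> y = \<sigma> i \<and> prio y \<le> prio i) LL"
  have "ys = filter (\<lambda>y. (\<sigma> y = \<sigma> i \<and> prio y \<le> prio i) \<and> prio y < prio i) LL @ i #
        filter (\<lambda>y. (\<sigma> y = \<sigma> i \<and> prio y \<le> prio i) \<and> prio i < prio y) LL"
    unfolding ys_def by (rule filter_split[OF sortedLL]) (use assms setLL in auto)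
  also have "filter (\<lambda>y. (\<sigma> y = \<sigma> i \<and> prio y \<le> prio i) \<and> prio y < prio i) LL = bef \<sigma> (\<sigma> i) i"
    unfolding bef_def by (rule filter_cong) auto
  also have "filter (\<lambda>y. (\<sigma> y = \<sigma> i \<and> prio y \<le> prio i) \<and> prio i < prio y) LL = []"
    by (auto simp: filter_empty_conv)
  finally have ys: "ys = bef \<sigma> (\<sigma> i) i @ [i]" .
  have c: "fin pp 0 ys = compl N prio tau b a \<sigma> i"
    unfolding ys compl_eq[OF assms] by (simp add: fin_append)
  have sy: "sorted_wrt (\<lambda>x y. prio x < prio y) ys"
    unfolding ys_def using sortedLL by (simp add: sorted_wrt_filter)
  have sety: "set ys = {x\<in>N. \<sigma> x = \<sigma> i \<and> prio x \<le> prio i}"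
    unfolding ys_def using setLL by auto
  have F: "\<And>x. x \<in> set ys \<Longrightarrow> filter (\<lambda>y. prio y < prio x) ys = bef \<sigma> (\<sigma> x) x"
  proof -
    fix x assume "x \<in> set ys"
    then have "\<sigma> x = \<sigma> i" "prio x \<le> prio i" unfolding ys_def by auto
    then show "filter (\<lambda>y. prio y < prio x) ys = bef \<sigma> (\<sigma> x) x"
      unfolding ys_def bef_def filter_filter by (intro filter_cong) auto
  qed
  have "fin pp 0 ys = (\<Sum>x\<in>set ys. pp x (fin pp 0 (filter (\<lambda>y. prio y < prio x) ys)))"
    using tele[OF sy, of pp 0] by simp
  also have "\<dots> = (\<Sum>x\<in>set ys. pp x (fin pp 0 (bef \<sigma> (\<sigma> x) x)))"
    by (rule sum.cong) (simp_all add: F)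
  finally show ?thesis unfolding c sety .
qed

lemma main:
  fixes M :: "'m set" and \<sigma> \<sigma>' :: "'j \<Rightarrow> 'm"
  assumes finM: "finite M" and m2: "card M \<ge> 2"
    and NE: "is_NE N M prio tau b a \<sigma>" and prof: "is_profile N M \<sigma>'" and k: "k \<in> N"
  shows "compl N prio tau b a \<sigma> k \<le> (3 - 2 / real (card M)) * makespan N prio tau b a \<sigma>'"
proof -
  define m where "m = card M"
  define Z where "Z = makespan N prio tau b a \<sigma>'"
  define S' where "S' x = fin pp 0 (bef \<sigma>' (\<sigma>' x) x)" for x
  define ps where "ps x = pp x (S' x)" for x
  define Cs where "Cs x = S' x + ps x" for x
  have Cs_eq: "\<And>x. x \<in> N \<Longrightarrow> compl N prio tau b a \<sigma>' x = Cs x"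
    unfolding Cs_def ps_def S'_def by (rule compl_eq)
  have Zfin: "finite (insert 0 (compl N prio tau b a \<sigma>' ` N))" using finN by simp
  have CsZ: "Cs x \<le> Z" if "x \<in> N" for x
  proof -
    have "compl N prio tau b a \<sigma>' x \<in> insert 0 (compl N prio tau b a \<sigma>' ` N)" using that by simp
    then have "compl N prio tau b a \<sigma>' x \<le> Z" unfolding Z_def makespan_def by (rule Max_ge[OF Zfin])
    then show ?thesis using Cs_eq[OF that] by simp
  qed
  have Z0: "0 \<le> Z" unfolding Z_def makespan_def using Zfin by (simp add: Max_ge)
  have ps0: "ps x \<ge> 0" if "x \<in> N" for x
    using pp_ge[OF that, of "S' x"] taupos[OF that] unfolding ps_def by linarith
  have S'0: "\<And>x. x \<in> N \<Longrightarrow> S' x \<ge> 0" unfolding S'_def by (rule fin_nonneg) (auto simp: set_bef)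
  have pre: "Cs i = (\<Sum>x\<in>{x\<in>N. \<sigma>' x = \<sigma>' i \<and> prio x \<le> prio i}. ps x)" if "i \<in> N" for i
    using prefix_sum[OF that, of \<sigma>'] Cs_eq[OF that] unfolding ps_def S'_def by simp
  have tot: "(\<Sum>x\<in>N. ps x) \<le> m * Z"
  proof -
    have "(\<Sum>x\<in>N. ps x) = (\<Sum>\<mu>\<in>M. \<Sum>x\<in>{x. x \<in> N \<and> \<sigma>' x = \<mu>}. ps x)"
      by (rule sum.group[symmetric]) (use finN finM prof in \<open>auto simp: is_profile_def\<close>)
    also have "\<dots> \<le> (\<Sum>\<mu>\<in>M. Z)"
    proof (rule sum_mono)
      fix \<mu> assume "\<mu> \<in> M"
      define A where "A = {x. x \<in> N \<and> \<sigma>' x = \<mu>}"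
      show "(\<Sum>x\<in>{x. x \<in> N \<and> \<sigma>' x = \<mu>}. ps x) \<le> Z"
      proof (cases "A = {}")
        case True
        then have "{x. x \<in> N \<and> \<sigma>' x = \<mu>} = {}" unfolding A_def by simp
        then show ?thesis using Z0 by (simp only: sum.empty)
      next
        case False
        have fA: "finite A" using finN unfolding A_def by simp
        have "Max (prio ` A) \<in> prio ` A" using fA False by simp
        then obtain i where i: "i \<in> A" "prio i = Max (prio ` A)" by (metis imageE)
        have "\<And>x. x \<in> A \<Longrightarrow> prio x \<le> prio i" using i fA by simp
        then have "A = {x\<in>N. \<sigma>' x = \<sigma>' i \<and> prio x \<le> prio i}" using i(1) unfolding A_def by auto
        then have "(\<Sum>x\<in>A. ps x) = Cs i" using pre[of i] i(1) unfolding A_def by auto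
        then show ?thesis using CsZ[of i] i(1) unfolding A_def by auto
      qed
    qed
    finally show ?thesis unfolding m_def by simp
  qed
  define T where "T j = fin pp 0 (bef \<sigma> j k)" for j
  define A where "A j = {x\<in>N. \<sigma> x = j \<and> prio x < prio k}" for j
  have finA: "\<And>j. finite (A j)" unfolding A_def using finN by simp
  have Tcases: "\<And>j. T j \<le> (\<Sum>x\<in>A j. ps x) \<or>
      (\<exists>g\<in>A j. T j \<le> Cs g + (\<Sum>x\<in>{x\<in>A j. prio g < prio x}. ps x))"
  proof -
    fix j
    have "fin pp 0 (bef \<sigma> j k) \<le> (\<Sum>x\<in>set (bef \<sigma> j k). pp x (S' x)) \<or>
      (\<exists>g\<in>set (bef \<sigma> j k). fin pp 0 (bef \<sigma> j k) \<le> S' g + pp g (S' g) + (\<Sum>x\<in>{x\<in>set (bef \<sigma> j k). prio g < prio x}. pp x (S' x)))"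
    proof (rule chain[OF sorted_bef])
      fix x and s t :: real assume "x \<in> set (bef \<sigma> j k)" "s \<le> t"
      then have "x \<in> N" by (simp add: set_bef)
      then show "pp x t \<le> pp x s" "s + pp x s \<le> t + pp x t" using pp_anti pp_mono \<open>s \<le> t\<close> by auto
    next
      fix x assume "x \<in> set (bef \<sigma> j k)"
      then have "x \<in> N" by (simp add: set_bef)
      then show "pp x (S' x) \<ge> 0" using ps0 unfolding ps_def by auto
    qed
    then show "?thesis j" unfolding T_def A_def Cs_def ps_def set_bef by auto
  qed
  have Mne: "M \<noteq> {}" using m2 by auto
  have Mne': "\<exists>j. j \<in> M" using Mne by auto
  have sumT: "(\<Sum>j\<in>M. T j) \<le> (real m - 1) * Z + (\<Sum>x\<in>N - {k}. ps x)"
  proof -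
    have profs: "\<And>x. x \<in> N \<Longrightarrow> \<sigma> x \<in> M" using NE unfolding is_NE_def is_profile_def by blast
    have finNk: "finite (N - {k})" using finN by simp
    have subA: "(\<Sum>x\<in>{x\<in>A j. prio g < prio x}. ps x) \<le> (\<Sum>x\<in>A j. ps x)" for j g
      by (rule sum_mono2[OF finA]) (auto simp: A_def ps0)
    have grp: "(\<Sum>j\<in>M. \<Sum>x\<in>A j. ps x) \<le> (\<Sum>x\<in>N - {k}. ps x)"
    proof -
      have "(\<Sum>j\<in>M. \<Sum>x\<in>A j. ps x) = (\<Sum>j\<in>M. \<Sum>x\<in>{x. x \<in> {x\<in>N. prio x < prio k} \<and> \<sigma> x = j}. ps x)"
        by (rule sum.cong) (auto simp: A_def intro: sum.cong)
      also have "\<dots> = (\<Sum>x\<in>{x\<in>N. prio x < prio k}. ps x)"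
        by (rule sum.group) (use finN finM profs in auto)
      also have "\<dots> \<le> (\<Sum>x\<in>N - {k}. ps x)"
        by (rule sum_mono2[OF finNk]) (auto simp: ps0)
      finally show ?thesis .
    qed
    show ?thesis
    proof (cases "\<exists>j\<in>M. T j \<le> (\<Sum>x\<in>A j. ps x)")
      case True
      then obtain j0 where j0: "j0 \<in> M" "T j0 \<le> (\<Sum>x\<in>A j0. ps x)" by blast
      have bnd: "T j \<le> Z + (\<Sum>x\<in>A j. ps x)" for j
        using Tcases[of j] subA[of j] CsZ Z0 unfolding A_def by (smt (verit) mem_Collect_eq)
      have "(\<Sum>j\<in>M. T j) = T j0 + (\<Sum>j\<in>M - {j0}. T j)" using finM j0(1) by (simp add: sum.remove)
      also have "\<dots> \<le> (\<Sum>x\<in>A j0. ps x) + (\<Sum>j\<in>M - {j0}. Z + (\<Sum>x\<in>A j. ps x))"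
        using j0(2) sum_mono[of "M - {j0}" T "\<lambda>j. Z + (\<Sum>x\<in>A j. ps x)"] bnd by fastforce
      also have "\<dots> = real (card (M - {j0})) * Z + (\<Sum>j\<in>M. \<Sum>x\<in>A j. ps x)"
        using finM j0(1) by (simp add: sum.distrib sum.remove)
      also have "real (card (M - {j0})) = real m - 1" using finM j0(1) m2 unfolding m_def
        by (simp add: of_nat_diff)
      finally show ?thesis using grp by linarith
    next
      case False
      then have "\<forall>j\<in>M. \<exists>g\<in>A j. T j \<le> Cs g + (\<Sum>x\<in>{x\<in>A j. prio g < prio x}. ps x)"
        using Tcases by metis
      then obtain g where g: "\<And>j. j \<in> M \<Longrightarrow> g j \<in> A j \<and> T j \<le> Cs (g j) + (\<Sum>x\<in>{x\<in>A j. prio (g j) < prio x}. ps x)"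
        by metis
      obtain j1 where j1: "j1 \<in> M" "\<And>j. j \<in> M \<Longrightarrow> prio (g j1) \<le> prio (g j)"
        using ex_has_least_nat[of "\<lambda>j. j \<in> M" _ "\<lambda>j. prio (g j)"] Mne' by blast
      define U where "U = {x\<in>N. prio x < prio k \<and> prio (g (\<sigma> x)) < prio x}"
      define P where "P = {x\<in>N. \<sigma>' x = \<sigma>' (g j1) \<and> prio x \<le> prio (g j1)}"
      have gj1: "g j1 \<in> N" "prio (g j1) < prio k" using g[OF j1(1)] unfolding A_def by auto
      have e1: "(\<Sum>j\<in>M. T j) \<le> (\<Sum>j\<in>M. Cs (g j) + (\<Sum>x\<in>{x\<in>A j. prio (g j) < prio x}. ps x))"
        by (rule sum_mono) (use g in auto)
      also have "\<dots> = Cs (g j1) + (\<Sum>j\<in>M - {j1}. Cs (g j)) + (\<Sum>j\<in>M. \<Sum>x\<in>{x\<in>A j. prio (g j) < prio x}. ps x)"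
        using finM j1(1) by (simp add: sum.distrib sum.remove)
      finally have e2: "(\<Sum>j\<in>M. T j) \<le> Cs (g j1) + (\<Sum>j\<in>M - {j1}. Cs (g j)) + (\<Sum>j\<in>M. \<Sum>x\<in>{x\<in>A j. prio (g j) < prio x}. ps x)" .
      have e3: "(\<Sum>j\<in>M. \<Sum>x\<in>{x\<in>A j. prio (g j) < prio x}. ps x) = (\<Sum>x\<in>U. ps x)"
      proof -
        have "(\<Sum>j\<in>M. \<Sum>x\<in>{x\<in>A j. prio (g j) < prio x}. ps x) = (\<Sum>j\<in>M. \<Sum>x\<in>{x. x \<in> U \<and> \<sigma> x = j}. ps x)"
          by (rule sum.cong) (auto simp: A_def U_def intro!: sum.cong)
        also have "\<dots> = (\<Sum>x\<in>U. ps x)"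
          by (rule sum.group) (use finN finM profs in \<open>auto simp: U_def\<close>)
        finally show ?thesis .
      qed
      have e4: "Cs (g j1) = (\<Sum>x\<in>P. ps x)" unfolding P_def by (rule pre[OF gj1(1)])
      have e5: "(\<Sum>j\<in>M - {j1}. Cs (g j)) \<le> (real m - 1) * Z"
      proof -
        have "(\<Sum>j\<in>M - {j1}. Cs (g j)) \<le> real (card (M - {j1})) * Z"
          by (rule sum_bounded_above) (use g CsZ in \<open>auto simp: A_def\<close>)
        also have "real (card (M - {j1})) = real m - 1" using finM j1(1) m2 unfolding m_def
          by (simp add: of_nat_diff)
        finally show ?thesis .
      qed
      have e6: "(\<Sum>x\<in>P. ps x) + (\<Sum>x\<in>U. ps x) = (\<Sum>x\<in>P \<union> U. ps x)"
      proof (rule sum.union_disjoint[symmetric])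
        show "finite P" "finite U" using finN unfolding P_def U_def by auto
        show "P \<inter> U = {}"
        proof (rule ccontr)
          assume "P \<inter> U \<noteq> {}"
          then obtain x where x: "x \<in> P" "x \<in> U" by blast
          then have "\<sigma> x \<in> M" using profs unfolding U_def by auto
          then have "prio (g j1) \<le> prio (g (\<sigma> x))" using j1(2) by blast
          then show False using x unfolding P_def U_def by auto
        qed
      qed
      have e7: "(\<Sum>x\<in>P \<union> U. ps x) \<le> (\<Sum>x\<in>N - {k}. ps x)"
        by (rule sum_mono2[OF finNk]) (use gj1 in \<open>auto simp: P_def U_def ps0\<close>)
      show ?thesis using e2 e3 e4 e5 e6 e7 by linarith
    qed
  qed
  have NEk: "\<And>j. j \<in> M \<Longrightarrow> compl N prio tau b a \<sigma> k \<le> T j + pp k (T j)"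
  proof -
    fix j assume "j \<in> M"
    then have "compl N prio tau b a \<sigma> k \<le> compl N prio tau b a (\<sigma>(k:=j)) k"
      using NE k unfolding is_NE_def by blast
    then show "compl N prio tau b a \<sigma> k \<le> T j + pp k (T j)" unfolding compl_upd[OF k] T_def .
  qed
  have "Min (T ` M) \<in> T ` M" using finM Mne by simp
  then obtain j0 where j0: "j0 \<in> M" "T j0 = Min (T ` M)" by (metis imageE)
  have j0min: "\<And>j. j \<in> M \<Longrightarrow> T j0 \<le> T j" using j0 finM by simp
  have mT: "real m * T j0 \<le> (\<Sum>j\<in>M. T j)"
    unfolding m_def using sum_bounded_below[of M "T j0" T] j0min by simp
  have Ck: "compl N prio tau b a \<sigma> k \<le> T j0 + pp k (T j0)" using NEk[OF j0(1)] .
  have m2': "real m \<ge> 2" using m2 unfolding m_def by simp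
  have c1: "1 \<le> 3 - 2 / real m" using m2' by (simp add: field_simps)
  show ?thesis
  proof (cases "T j0 \<le> S' k")
    case True
    then have "T j0 + pp k (T j0) \<le> Cs k" unfolding Cs_def ps_def using pp_mono k by simp
    also have "\<dots> \<le> Z" using CsZ k by simp
    also have "\<dots> \<le> (3 - 2 / real m) * Z" using mult_right_mono[OF c1 Z0] by simp
    finally show ?thesis using Ck unfolding Z_def m_def by linarith
  next
    case False
    then have pk: "pp k (T j0) \<le> ps k" unfolding ps_def using pp_anti k by simp
    have psk: "ps k \<le> Z" using CsZ[OF k] S'0[OF k] unfolding Cs_def by linarith
    have split: "(\<Sum>x\<in>N. ps x) = ps k + (\<Sum>x\<in>N - {k}. ps x)"
      using finN k by (simp add: sum.remove)
    have "real m * T j0 \<le> (real m - 1) * Z + real m * Z - ps k"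
      using mT sumT tot split by linarith
    moreover have "(real m - 1) * ps k \<le> (real m - 1) * Z" using psk m2' by (simp add: mult_left_mono)
    ultimately have "real m * (T j0 + ps k) \<le> (3 * real m - 2) * Z" by (simp add: algebra_simps)
    then have "T j0 + ps k \<le> (3 * real m - 2) * Z / real m" using m2' by (simp add: field_simps)
    also have "\<dots> = (3 - 2 / real m) * Z" using m2' by (simp add: field_simps)
    finally show ?thesis using Ck pk unfolding Z_def m_def by linarith
  qed
qed

end

theorem theorem14:
  fixes N :: "'j set" and M :: "'m set" and prio :: "'j \<Rightarrow> nat"
    and tau b a :: "'j \<Rightarrow> real" and sigma :: "'j \<Rightarrow> 'm"
  assumes "finite N" and "finite M" and "card M \<ge> 2"
    and "bij_betw prio N {1..card N}"
    and "\<And>i. i \<in> N \<Longrightarrow> tau i > 0"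
    and "\<And>i. i \<in> N \<Longrightarrow> b i \<ge> 0"
    and "\<And>i. i \<in> N \<Longrightarrow> 0 \<le> a i \<and> a i \<le> 1"
    and "is_NE N M prio tau b a sigma"
  shows "makespan N prio tau b a sigma \<le> (3 - 2 / real (card M)) * OPT N M prio tau b a"
proof -
  interpret sg N prio tau b a
    by unfold_locales (use assms in auto)
  define c where "c = 3 - 2 / real (card M)"
  have m2: "real (card M) \<ge> 2" using assms(3) by simp
  have cpos: "c > 0" unfolding c_def using m2 by (simp add: field_simps)
  have Mne: "M \<noteq> {}" using assms(3) by auto
  have key: "makespan N prio tau b a sigma / c \<le> makespan N prio tau b a s'"
    if prof: "s' \<in> {s'. is_profile N M s'}" for s'
  proof -
    have fin: "finite (insert 0 (compl N prio tau b a s' ` N))" using assms(1) by simp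
    have Z0: "0 \<le> makespan N prio tau b a s'" unfolding makespan_def using fin by (simp add: Max_ge)
    have "makespan N prio tau b a sigma \<le> c * makespan N prio tau b a s'"
      unfolding makespan_def[of N prio tau b a sigma]
    proof (rule Max.boundedI)
      show "finite (insert 0 (compl N prio tau b a sigma ` N))" using assms(1) by simp
      show "insert 0 (compl N prio tau b a sigma ` N) \<noteq> {}" by simp
      fix x assume "x \<in> insert 0 (compl N prio tau b a sigma ` N)"
      then show "x \<le> c * makespan N prio tau b a s'"
      proof
        assume "x = 0" then show ?thesis using cpos Z0 by simp
      next
        assume "x \<in> compl N prio tau b a sigma ` N"
        then obtain k where k: "k \<in> N" "x = compl N prio tau b a sigma k" by blast
        show ?thesis unfolding k(2) c_def
          by (rule main[OF assms(2) assms(3) assms(8) _ k(1)]) (use prof in simp)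
      qed
    qed
    then show ?thesis using cpos by (simp add: field_simps)
  qed
  have ne: "{s'. is_profile N M s'} \<noteq> {}"
  proof -
    obtain j where "j \<in> M" using Mne by blast
    then have "is_profile N M (\<lambda>_. j)" by (simp add: is_profile_def)
    then show ?thesis by blast
  qed
  have "makespan N prio tau b a sigma / c \<le> OPT N M prio tau b a"
    unfolding OPT_def by (rule cINF_greatest[OF ne key])
  then show ?thesis using cpos unfolding c_def[symmetric] by (simp add: field_simps)
qed

end
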